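(* In the quantized ARX setting described in the context, suppose Assumptions (A1)–(A5) hold, and let $0\le p\le p_0$. Write the least squares estimate $\theta_n(p,q^* )=[-a_{1n}(p),\dots,-a_{pn}(p),b_{1n}(p),\dots,b_{q^*n}(p)]^\top$, define $$\hat\theta_n(p)=[-a_{1n}(p),\dots,-a_{pn}(p),\underbrace{0,\dots,0}_{p_0-p},b_{1n}(p),\dots,b_{q^*n}(p)]^\top$$ and $\tilde\theta_n(p)=\bar\theta(p_0,q^* )-\hat\theta_n(p)$. Then there is a constant $\gamma$ such that, almost surely, $\|\tilde\theta_n(p)\|\le\gamma$ for all sufficiently large $n$.
   Context: System: $y_{n+1}=-a_1y_n-\dots-a_{p_0}y_{n-p_0+1}+b_1u_n+\dots+b_{q_0}u_{n-q_0+1}+w_{n+1}$, $n\ge0$, i.e. $A(z)y_{n+1}=B(z)u_n+w_{n+1}$ with $A(z)=1+a_1z+\dots+a_{p_0}z^{p_0}$ ($p_0\ge0$), $B(z)=b_1+\dots+b_{q_0}z^{q_0-1}$ ($q_0\ge1$), $z$ the backward shift, $a_{p_0}\ne0$, $b_{q_0}\ne0$. Noise $\{w_n\}$ i.i.d. $N(0,1)$; $y_n=u_n=w_n=0$ for $n<0$. With quantization step $\varepsilon>0$, $s_n=\varepsilon\lfloor y_n/\varepsilon+1/2\rfloor$. For integers $p,q\ge0$, $\psi_i(p,q)=[s_i,\dots,s_{i-p+1},u_i,\dots,u_{i-q+1}]^\top$ with $s_i=u_i=0$ when $i\le0$; $P_{n}(p,q)=(I+\sum_{i=0}^{n-1}\psi_i(p,q)\psi_i(p,q)^\top)^{-1}$;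 $\lambda^{(p,q)}_{min}(n)$ is the smallest eigenvalue of $P_{n+1}^{-1}(p,q)$. Least squares estimate $\theta_n(p,q)=P_n(p,q)\sum_{i=0}^{n-1}\psi_i(p,q)s_{i+1}$. $\bar\theta(p,q)=[-a_1,\dots,-a_p,b_1,\dots,b_q]^\top$ with $a_i=0$ for $i>p_0$, $b_j=0$ for $j>q_0$. Assumptions: (A1) $\{u_i\}$ i.i.d., uniform on $[-\delta,\delta]$, $\delta>0$. (A2) $A(z)\ne0$ for all $|z|\le1$. (A3) There is $c>0$ with $|a_i|\le c$, $|b_j|\le c$ for all $i,j$, and $\varepsilon<\frac{1}{2(1+p_0c)}$. (A4) $(p_0,q_0)\in\{(p,q):0\le p\le p^*,1\le q\le q^*\}$ for known integers $p^*,q^*>0$. (A5) There is $c_1>0$ such that for all $0\le p\le p^*$, almost surely $\lambda^{(p,q^* )}_{min}(n)\ge c_1(n+1)$ for all sufficiently large $n$. *)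

theory Defs
  imports "HOL-Probability.Probability" "Jordan_Normal_Form.Gauss_Jordan_Elimination"
    "Jordan_Normal_Form.Char_Poly"
begin

definition quant :: "real \<Rightarrow> real \<Rightarrow> real" where
  "quant eps y = eps * real_of_int \<lfloor>y / eps + 1/2\<rfloor>"

(* regressor psi_i(p,q) = [s_i,...,s_{i-p+1}, u_i,...,u_{i-q+1}], entries with index <= 0 are 0 *)
definition regr :: "(nat \<Rightarrow> real) \<Rightarrow> (nat \<Rightarrow> real) \<Rightarrow> nat \<Rightarrow> nat \<Rightarrow> nat \<Rightarrow> real vec" where
  "regr s u p q i = vec (p + q) (\<lambda>k. if k < p then (if k < i then s (i - k) else 0)
                                    else (if k - p < i then u (i - (k - p)) else 0))"

definition Pinv :: "(nat \<Rightarrow> real) \<Rightarrow> (nat \<Rightarrow> real) \<Rightarrow> nat \<Rightarrow> nat \<Rightarrow> nat \<Rightarrow> real mat" where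
  "Pinv s u p q n = mat (p + q) (p + q)
     (\<lambda>(j, k). (if j = k then 1 else 0) + (\<Sum>i<n. regr s u p q i $ j * regr s u p q i $ k))"

definition Pmat :: "(nat \<Rightarrow> real) \<Rightarrow> (nat \<Rightarrow> real) \<Rightarrow> nat \<Rightarrow> nat \<Rightarrow> nat \<Rightarrow> real mat" where
  "Pmat s u p q n = the (mat_inverse (Pinv s u p q n))"

definition lambda_min :: "(nat \<Rightarrow> real) \<Rightarrow> (nat \<Rightarrow> real) \<Rightarrow> nat \<Rightarrow> nat \<Rightarrow> nat \<Rightarrow> real" where
  "lambda_min s u p q n = Min {k. eigenvalue (Pinv s u p q (Suc n)) k}"

definition theta_LS :: "(nat \<Rightarrow> real) \<Rightarrow> (nat \<Rightarrow> real) \<Rightarrow> nat \<Rightarrow> nat \<Rightarrow> nat \<Rightarrow> real vec" where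
  "theta_LS s u p q n = Pmat s u p q n *\<^sub>v
     vec (p + q) (\<lambda>j. \<Sum>i<n. regr s u p q i $ j * s (Suc i))"

definition theta_bar :: "(nat \<Rightarrow> real) \<Rightarrow> (nat \<Rightarrow> real) \<Rightarrow> nat \<Rightarrow> nat \<Rightarrow> real vec" where
  "theta_bar a b p q = vec (p + q) (\<lambda>k. if k < p then - a (Suc k) else b (Suc (k - p)))"

definition theta_hat :: "(nat \<Rightarrow> real) \<Rightarrow> (nat \<Rightarrow> real) \<Rightarrow> nat \<Rightarrow> nat \<Rightarrow> nat \<Rightarrow> nat \<Rightarrow> real vec" where
  "theta_hat s u p0 p q n = vec (p0 + q) (\<lambda>k. if k < p then theta_LS s u p q n $ k
                                          else if k < p0 then 0
                                          else theta_LS s u p q n $ (k - p0 + p))"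

definition enorm :: "real vec \<Rightarrow> real" where
  "enorm v = sqrt (\<Sum>k<dim_vec v. (v $ k)\<^sup>2)"

end

theory Submission
  imports Defs "HOL-Complex_Analysis.Complex_Analysis"
begin


lemma sp_sum: fixes x y :: "'a::comm_semiring_0 Matrix.vec" shows "x \<in> carrier_vec n \<Longrightarrow> y \<in> carrier_vec n \<Longrightarrow> x \<bullet> y = (\<Sum>i<n. x$i * y$i)"
  unfolding scalar_prod_def by (simp add: atLeast0LessThan)

lemma qf_sum: fixes A :: "real mat" and x y :: "real Matrix.vec" assumes "A \<in> carrier_mat n n" "x \<in> carrier_vec n" "y \<in> carrier_vec n"
  shows "x \<bullet> (A *\<^sub>v y) = (\<Sum>i<n. \<Sum>j<n. x$i * A$$(i,j) * y$j)"
proof -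
  have "x \<bullet> (A *\<^sub>v y) = (\<Sum>i<n. x$i * (A *\<^sub>v y)$i)" using assms by (simp add: sp_sum)
  also have "\<dots> = (\<Sum>i<n. x$i * (\<Sum>j<n. A$$(i,j) * y$j))"
    using assms by (intro sum.cong refl) (simp add: sp_sum row_def)
  finally show ?thesis by (simp add: sum_distrib_left mult.assoc)
qed

lemma sq_le_norm: fixes x :: "real Matrix.vec" assumes "x \<in> carrier_vec n" "i < n" shows "(x$i)\<^sup>2 \<le> x \<bullet> x"
proof -
  have "(x$i)\<^sup>2 = (\<Sum>k\<in>{i}. (x$k)\<^sup>2)" by simp
  also have "\<dots> \<le> (\<Sum>k<n. (x$k)\<^sup>2)" using assms by (intro sum_mono2) auto
  finally show ?thesis using assms by (simp add: sp_sum power2_eq_square)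
qed

lemma self_sp_nonneg: fixes x :: "real Matrix.vec" shows "x \<in> carrier_vec n \<Longrightarrow> (0::real) \<le> x \<bullet> x"
  by (simp add: sp_sum sum_nonneg)

lemma self_sp_zero: fixes x :: "real Matrix.vec" assumes "x \<in> carrier_vec n" "x \<bullet> x = (0::real)" shows "x = 0\<^sub>v n"
proof (rule eq_vecI)
  fix i assume "i < dim_vec (0\<^sub>v n)"
  then have "i < n" by simp
  with sq_le_norm[OF assms(1) this] assms(2) show "x $ i = 0\<^sub>v n $ i" by simp
qed (use assms in auto)

lemma qf_bound: fixes A :: "real mat" and x :: "real Matrix.vec" assumes A: "A \<in> carrier_mat n n" and x: "x \<in> carrier_vec n"
  shows "\<bar>x \<bullet> (A *\<^sub>v x)\<bar> \<le> (\<Sum>i<n. \<Sum>j<n. \<bar>A$$(i,j)\<bar>) * (x \<bullet> x)"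
proof -
  have "\<bar>x \<bullet> (A *\<^sub>v x)\<bar> \<le> (\<Sum>i<n. \<Sum>j<n. \<bar>x$i * A$$(i,j) * x$j\<bar>)"
    unfolding qf_sum[OF A x x] by (rule order.trans[OF sum_abs sum_mono]) (rule sum_abs)
  also have "\<dots> \<le> (\<Sum>i<n. \<Sum>j<n. \<bar>A$$(i,j)\<bar> * (x \<bullet> x))"
  proof (intro sum_mono)
    fix i j assume i: "i \<in> {..<n}" and j: "j \<in> {..<n}"
    have "\<bar>x$i * x$j\<bar> \<le> ((x$i)\<^sup>2 + (x$j)\<^sup>2)/2"
      using sum_squares_bound[of "\<bar>x$i\<bar>" "\<bar>x$j\<bar>"] by (simp add: abs_mult)
    also have "\<dots> \<le> x \<bullet> x" using sq_le_norm[OF x, of i] sq_le_norm[OF x, of j] i j by auto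
    finally have xx: "\<bar>x$i * x$j\<bar> \<le> x \<bullet> x" .
    show "\<bar>x$i * A$$(i,j) * x$j\<bar> \<le> \<bar>A$$(i,j)\<bar> * (x \<bullet> x)"
      using mult_right_mono[OF xx abs_ge_zero[of "A$$(i,j)"]] by (simp add: abs_mult algebra_simps)
  qed
  finally show ?thesis by (simp add: sum_distrib_right)
qed

lemma mv_bound: fixes A :: "real mat" and x :: "real Matrix.vec" assumes A: "A \<in> carrier_mat n n" and x: "x \<in> carrier_vec n"
  shows "(A *\<^sub>v x) \<bullet> (A *\<^sub>v x) \<le> (\<Sum>i<n. \<Sum>j<n. (A$$(i,j))\<^sup>2) * (x \<bullet> x)"
proof -
  have "(A *\<^sub>v x) \<bullet> (A *\<^sub>v x) = (\<Sum>i<n. (\<Sum>j<n. A$$(i,j) * x$j)\<^sup>2)"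
    using A x by (simp add: sp_sum[of _ n] row_def power2_eq_square)
  also have "\<dots> \<le> (\<Sum>i<n. (\<Sum>j<n. (A$$(i,j))\<^sup>2) * (\<Sum>j<n. (x$j)\<^sup>2))"
    by (intro sum_mono Cauchy_Schwarz_ineq_sum)
  finally show ?thesis using x by (simp add: sp_sum[OF x x] sum_distrib_right power2_eq_square)
qed

lemma quad_disc:
  fixes al be ga :: real
  assumes "\<And>s. 0 \<le> al + 2 * s * be + s\<^sup>2*ga"
  shows "be\<^sup>2 \<le> al * ga"
proof (cases "ga = 0")
  case True
  show ?thesis
  proof (rule ccontr)
    assume "\<not> ?thesis"
    then have b: "be \<noteq> 0" using True by auto
    have "0 \<le> al + 2 * (-(al+1)/(2*be))*be" using assms[of "-(al+1)/(2*be)"] True by simp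
    also have "\<dots> = -1" using b by (simp add: field_simps)
    finally show False by simp
  qed
next
  case False
  have g: "ga \<ge> 0"
  proof (rule ccontr)
    assume "\<not> ga \<ge> 0" then have gn: "ga < 0" by simp
    define K where "K = \<bar>al\<bar> + 2*\<bar>be\<bar> + 1"
    define s where "s = K / (-ga) + 1"
    have K1: "K \<ge> 1" unfolding K_def by simp
    have s1: "s \<ge> 1" using gn K1 unfolding s_def by (simp add: field_simps)
    have sg: "s*ga = -K + ga" using gn unfolding s_def by (simp add: field_simps)
    have "s\<^sup>2*ga = s * (s*ga)" by (simp add: power2_eq_square)
    also have "\<dots> \<le> s * (-K)" using sg gn s1 by (intro mult_left_mono) auto
    finally have e: "s\<^sup>2*ga \<le> - s * K" by simp
    have "al + 2 * s * be \<le> s*\<bar>al\<bar> + s*(2*\<bar>be\<bar>)"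
    proof -
      have "al \<le> s*\<bar>al\<bar>" using mult_right_mono[OF s1 abs_ge_zero[of al]] abs_ge_self[of al] by simp
      moreover have "s * be \<le> s*\<bar>be\<bar>" using mult_left_mono[OF abs_ge_self[of be], of s] s1 by simp
      then have "2 * s * be \<le> s*(2*\<bar>be\<bar>)" by simp
      ultimately show ?thesis by simp
    qed
    then have "al + 2 * s * be + s\<^sup>2*ga \<le> -s" using e unfolding K_def by (simp add: algebra_simps)
    with assms[of s] s1 show False by simp
  qed
  with False have gp: "ga > 0" by simp
  have "0 \<le> al + 2 * (-be/ga)*be + (-be/ga)\<^sup>2*ga" by (rule assms)
  also have "\<dots> = al - be\<^sup>2/ga" using gp by (simp add: field_simps power2_eq_square)
  finally show ?thesis using gp by (simp add: field_simps)
qed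

definition symm :: "real mat \<Rightarrow> nat \<Rightarrow> bool" where
  "symm A n \<longleftrightarrow> A \<in> carrier_mat n n \<and> (\<forall>i<n. \<forall>j<n. A$$(i,j) = A$$(j,i))"

lemma symm_swap: assumes "symm A n" "x \<in> carrier_vec n" "y \<in> carrier_vec n"
  shows "y \<bullet> (A *\<^sub>v x) = x \<bullet> (A *\<^sub>v y)"
proof -
  have A: "A \<in> carrier_mat n n" using assms unfolding symm_def by auto
  have "y \<bullet> (A *\<^sub>v x) = (\<Sum>i<n. \<Sum>j<n. y$i * A$$(i,j) * x$j)" by (rule qf_sum[OF A assms(3,2)])
  also have "\<dots> = (\<Sum>j<n. \<Sum>i<n. y$i * A$$(i,j) * x$j)" by (rule sum.swap)
  also have "\<dots> = (\<Sum>j<n. \<Sum>i<n. x$j * A$$(j,i) * y$i)"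
    using assms(1) unfolding symm_def by (intro sum.cong refl) (auto simp: mult.commute mult.left_commute)
  also have "\<dots> = x \<bullet> (A *\<^sub>v y)" by (rule qf_sum[OF A assms(2,3), symmetric])
  finally show ?thesis .
qed

lemma qf_expand: fixes A :: "real mat"
  assumes A: "A \<in> carrier_mat n n" and x: "x \<in> carrier_vec n" and y: "y \<in> carrier_vec n"
  shows "(x + s \<cdot>\<^sub>v y) \<bullet> (A *\<^sub>v (x + s \<cdot>\<^sub>v y)) =
     x \<bullet> (A *\<^sub>v x) + s * (y \<bullet> (A *\<^sub>v x) + x \<bullet> (A *\<^sub>v y)) + s\<^sup>2 * (y \<bullet> (A *\<^sub>v y))"
proof -
  have c: "x + s \<cdot>\<^sub>v y \<in> carrier_vec n" using x y by simp
  have "(x + s \<cdot>\<^sub>v y) \<bullet> (A *\<^sub>v (x + s \<cdot>\<^sub>v y)) =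
     (\<Sum>i<n. \<Sum>j<n. (x$i + s*y$i) * A$$(i,j) * (x$j + s*y$j))"
    unfolding qf_sum[OF A c c] using x y by (intro sum.cong refl) auto
  also have "\<dots> = (\<Sum>i<n. \<Sum>j<n. x$i * A$$(i,j) * x$j + s * (y$i * A$$(i,j) * x$j) + s * (x$i * A$$(i,j) * y$j)
      + s\<^sup>2 * (y$i * A$$(i,j) * y$j))"
    by (intro sum.cong refl) (simp add: algebra_simps power2_eq_square)
  also have "\<dots> = x \<bullet> (A *\<^sub>v x) + s * (y \<bullet> (A *\<^sub>v x) + x \<bullet> (A *\<^sub>v y)) + s\<^sup>2 * (y \<bullet> (A *\<^sub>v y))"
    unfolding qf_sum[OF A x x] qf_sum[OF A y x] qf_sum[OF A x y] qf_sum[OF A y y]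
    by (simp add: sum.distrib sum_distrib_left distrib_left)
  finally show ?thesis .
qed

lemma psd_cs: assumes S: "symm A n" and psd: "\<And>z. z \<in> carrier_vec n \<Longrightarrow> 0 \<le> z \<bullet> (A *\<^sub>v z)"
  and x: "x \<in> carrier_vec n" and y: "y \<in> carrier_vec n"
  shows "(y \<bullet> (A *\<^sub>v x))\<^sup>2 \<le> (x \<bullet> (A *\<^sub>v x)) * (y \<bullet> (A *\<^sub>v y))"
proof (rule quad_disc)
  fix s :: real
  have A: "A \<in> carrier_mat n n" using S unfolding symm_def by auto
  have "0 \<le> (x + s \<cdot>\<^sub>v y) \<bullet> (A *\<^sub>v (x + s \<cdot>\<^sub>v y))" using x y by (intro psd) simp
  also have "\<dots> = x \<bullet> (A *\<^sub>v x) + 2 * s * (y \<bullet> (A *\<^sub>v x)) + s\<^sup>2 * (y \<bullet> (A *\<^sub>v y))"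
    unfolding qf_expand[OF A x y] symm_swap[OF S x y] by simp
  finally show "0 \<le> x \<bullet> (A *\<^sub>v x) + 2 * s * (y \<bullet> (A *\<^sub>v x)) + s\<^sup>2 * (y \<bullet> (A *\<^sub>v y))" .
qed

lemma charmat_mv: fixes A :: "real mat" assumes A: "A \<in> carrier_mat n n" and z: "z \<in> carrier_vec n"
  shows "char_matrix A t *\<^sub>v z = A *\<^sub>v z - t \<cdot>\<^sub>v z"
proof (rule eq_vecI)
  fix i assume "i < dim_vec (A *\<^sub>v z - t \<cdot>\<^sub>v z)"
  then have i: "i < n" using A z by simp
  have "(\<Sum>j<n. (A $$ (i, j) - t * (if i = j then 1 else 0)) * z $ j) =
     (\<Sum>j<n. A $$ (i, j) * z $ j - (if j = i then t * z $ i else 0))"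
    by (intro sum.cong) (auto simp: left_diff_distrib)
  also have "\<dots> = (\<Sum>j<n. A $$ (i, j) * z $ j) - t * z $ i" using i by (simp add: sum_subtractf)
  finally show "(char_matrix A t *\<^sub>v z) $ i = (A *\<^sub>v z - t \<cdot>\<^sub>v z) $ i"
    using A z i unfolding char_matrix_def by (simp add: sp_sum[of _ n] row_def)
qed (use A z in \<open>auto simp: char_matrix_def\<close>)

lemma charmat_qf: fixes A :: "real mat" assumes A: "A \<in> carrier_mat n n" and z: "z \<in> carrier_vec n"
  shows "z \<bullet> (char_matrix A t *\<^sub>v z) = z \<bullet> (A *\<^sub>v z) - t * (z \<bullet> z)"
  unfolding charmat_mv[OF A z] using A z
  by (simp add: sp_sum[of _ n] sum_subtractf right_diff_distrib sum_distrib_left mult.left_commute)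

lemma charmat_symm: assumes "symm A n" shows "symm (char_matrix A t) n"
  using assms unfolding symm_def char_matrix_def by auto

lemma eig_finite: fixes A :: "real mat" assumes A: "A \<in> carrier_mat n n"
  shows "finite {k. eigenvalue A k}"
proof -
  have "char_poly A \<noteq> 0" using degree_monic_char_poly[OF A] by auto
  then have "finite {k. poly (char_poly A) k = 0}" by (rule poly_roots_finite)
  then show ?thesis unfolding eigenvalue_root_char_poly[OF A] .
qed

lemma sym_min_eig:
  assumes S: "symm A n" and n: "n > 0" and x: "x \<in> carrier_vec n"
  shows "Min {k. eigenvalue A k} * (x \<bullet> x) \<le> x \<bullet> (A *\<^sub>v x)"
proof -
  have A: "A \<in> carrier_mat n n" using S unfolding symm_def by auto
  define St where "St = {t. \<forall>z\<in>carrier_vec n. t * (z \<bullet> z) \<le> z \<bullet> (A *\<^sub>v z)}"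
  define K where "K = (\<Sum>i<n. \<Sum>j<n. \<bar>A$$(i,j)\<bar>)"
  have "-K \<in> St" unfolding St_def K_def
  proof (safe)
    fix z :: "real Matrix.vec" assume z: "z \<in> carrier_vec n"
    show "- (\<Sum>i<n. \<Sum>j<n. \<bar>A $$ (i, j)\<bar>) * (z \<bullet> z) \<le> z \<bullet> (A *\<^sub>v z)"
      using qf_bound[OF A z] by linarith
  qed
  then have Sne: "St \<noteq> {}" by auto
  define e :: "real Matrix.vec" where "e = unit_vec n 0"
  have e: "e \<in> carrier_vec n" unfolding e_def by simp
  have ee: "e \<bullet> e = 1" unfolding e_def using n by simp
  have Sbdd: "bdd_above St"
    unfolding bdd_above_def St_def using e ee by (intro exI[of _ "e \<bullet> (A *\<^sub>v e)"]) force
  define t0 where "t0 = Sup St"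
  have t0S: "t0 \<in> St" unfolding St_def
  proof (safe)
    fix z :: "real Matrix.vec" assume z: "z \<in> carrier_vec n"
    show "t0 * (z \<bullet> z) \<le> z \<bullet> (A *\<^sub>v z)"
    proof (cases "z \<bullet> z = 0")
      case True
      then have "z = 0\<^sub>v n" using self_sp_zero z by blast
      then show ?thesis using True A by simp
    next
      case False
      then have zp: "z \<bullet> z > 0" using self_sp_nonneg[OF z] by simp
      have "t0 \<le> (z \<bullet> (A *\<^sub>v z)) / (z \<bullet> z)" unfolding t0_def
      proof (rule cSup_least[OF Sne])
        fix t assume "t \<in> St"
        then have "t * (z \<bullet> z) \<le> z \<bullet> (A *\<^sub>v z)" using z unfolding St_def by auto
        then show "t \<le> (z \<bullet> (A *\<^sub>v z)) / (z \<bullet> z)" using zp by (simp add: field_simps)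
      qed
      then show ?thesis using zp by (simp add: field_simps)
    qed
  qed
  define B where "B = char_matrix A t0"
  have B: "B \<in> carrier_mat n n" unfolding B_def using A by simp
  have SB: "symm B n" unfolding B_def by (rule charmat_symm[OF S])
  have Bqf: "z \<bullet> (B *\<^sub>v z) = z \<bullet> (A *\<^sub>v z) - t0 * (z \<bullet> z)" if "z \<in> carrier_vec n" for z
    unfolding B_def by (rule charmat_qf[OF A that])
  have Bpsd: "0 \<le> z \<bullet> (B *\<^sub>v z)" if z: "z \<in> carrier_vec n" for z
    using t0S z unfolding Bqf[OF z] St_def by auto
  have eig: "eigenvalue A t0"
  proof (rule ccontr)
    assume ne: "\<not> eigenvalue A t0"
    have "det B \<noteq> 0" using ne unfolding B_def eigenvalue_det[OF A] by simp
    from det_non_zero_imp_unit[OF B this, of "()"]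
    obtain C where C: "C \<in> carrier_mat n n" and CB: "C * B = 1\<^sub>m n"
      unfolding Units_def ring_mat_def by auto
    define K1 where "K1 = (\<Sum>i<n. \<Sum>j<n. \<bar>B$$(i,j)\<bar>)"
    define K2 where "K2 = (\<Sum>i<n. \<Sum>j<n. (C$$(i,j))\<^sup>2)"
    have K1: "K1 \<ge> 0" unfolding K1_def by (intro sum_nonneg) auto
    have K2: "K2 \<ge> 0" unfolding K2_def by (intro sum_nonneg) auto
    define \<delta> where "\<delta> = 1 / (K2 * K1 + 1)"
    have dpos: "\<delta> > 0" unfolding \<delta>_def using K1 K2 by (simp add: add_nonneg_pos)
    have "t0 + \<delta> \<in> St" unfolding St_def
    proof safe
      fix z :: "real Matrix.vec" assume z: "z \<in> carrier_vec n"
      define y where "y = B *\<^sub>v z"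
      have y: "y \<in> carrier_vec n" unfolding y_def using B z by simp
      have "z = C *\<^sub>v y" unfolding y_def using C B z CB
        by (metis assoc_mult_mat_vec one_mult_mat_vec)
      then have zz: "z \<bullet> z \<le> K2 * (y \<bullet> y)" unfolding K2_def using mv_bound[OF C y] by simp
      have cs: "(y \<bullet> y)\<^sup>2 \<le> (z \<bullet> (B *\<^sub>v z)) * (y \<bullet> (B *\<^sub>v y))"
        using psd_cs[OF SB Bpsd z y] unfolding y_def by simp
      have "y \<bullet> (B *\<^sub>v y) \<le> K1 * (y \<bullet> y)" unfolding K1_def using qf_bound[OF B y] by linarith
      then have "(y \<bullet> y)\<^sup>2 \<le> (z \<bullet> (B *\<^sub>v z)) * (K1 * (y \<bullet> y))"
        using cs Bpsd[OF z] by (meson mult_left_mono order_trans)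
      then have yy: "y \<bullet> y \<le> K1 * (z \<bullet> (B *\<^sub>v z))"
        using self_sp_nonneg[OF y] Bpsd[OF z] K1
        by (cases "y \<bullet> y = 0") (auto simp: power2_eq_square mult_ac)
      have "z \<bullet> z \<le> K2 * (K1 * (z \<bullet> (B *\<^sub>v z)))"
        using zz mult_left_mono[OF yy K2] by linarith
      also have "\<dots> \<le> (K2 * K1 + 1) * (z \<bullet> (B *\<^sub>v z))" using Bpsd[OF z] by (simp add: algebra_simps)
      finally have M: "z \<bullet> z \<le> (K2 * K1 + 1) * (z \<bullet> (B *\<^sub>v z))" .
      have pos: "K2 * K1 + 1 > 0" using K1 K2 by (simp add: add_nonneg_pos)
      have "\<delta> * (z \<bullet> z) = (z \<bullet> z) / (K2 * K1 + 1)" unfolding \<delta>_def by simp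
      also have "\<dots> \<le> z \<bullet> (B *\<^sub>v z)" using M pos by (simp add: pos_divide_le_eq mult.commute)
      finally have "\<delta> * (z \<bullet> z) \<le> z \<bullet> (B *\<^sub>v z)" .
      then show "(t0 + \<delta>) * (z \<bullet> z) \<le> z \<bullet> (A *\<^sub>v z)" unfolding Bqf[OF z] by (simp add: algebra_simps)
    qed
    then have "t0 + \<delta> \<le> t0" unfolding t0_def by (rule cSup_upper[OF _ Sbdd])
    then show False using dpos by simp
  qed
  have "Min {k. eigenvalue A k} \<le> t0" using eig eig_finite[OF A] by (intro Min_le) auto
  then have "Min {k. eigenvalue A k} * (x \<bullet> x) \<le> t0 * (x \<bullet> x)"
    using self_sp_nonneg[OF x] by (rule mult_right_mono)
  also have "\<dots> \<le> x \<bullet> (A *\<^sub>v x)" using t0S x unfolding St_def by auto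
  finally show ?thesis .
qed


lemma Pinv_carrier: "Pinv s u p q n \<in> carrier_mat (p+q) (p+q)"
  unfolding Pinv_def by simp

lemma Pinv_symm: "symm (Pinv s u p q n) (p+q)"
  unfolding symm_def Pinv_def by (auto simp: mult.commute)

lemma regr_dim[simp]: "dim_vec (regr s u p q i) = p + q"
  unfolding regr_def by simp

lemma delta_sum: "finite A \<Longrightarrow> (\<Sum>k\<in>A. f k * (if j = k then 1 else 0)) = (if j \<in> A then f j else (0::real))"
proof -
  assume "finite A"
  have "(\<Sum>k\<in>A. f k * (if j = k then 1 else 0)) = (\<Sum>k\<in>A. if k = j then f k else 0)" by (intro sum.cong) auto
  then show ?thesis using \<open>finite A\<close> by simp
qed

lemma Pinv_qf: fixes z :: "real Matrix.vec" assumes z: "z \<in> carrier_vec (p+q)"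
  shows "z \<bullet> (Pinv s u p q n *\<^sub>v z) = z \<bullet> z + (\<Sum>i<n. (\<Sum>j<p+q. regr s u p q i $ j * z $ j)\<^sup>2)"
proof -
  let ?d = "p+q"
  let ?r = "\<lambda>i j. regr s u p q i $ j"
  have "z \<bullet> (Pinv s u p q n *\<^sub>v z) = (\<Sum>j<?d. \<Sum>k<?d. z$j * ((if j = k then 1 else 0) + (\<Sum>i<n. ?r i j * ?r i k)) * z$k)"
    unfolding qf_sum[OF Pinv_carrier z z] by (intro sum.cong refl) (simp add: Pinv_def)
  also have "\<dots> = (\<Sum>j<?d. \<Sum>k<?d. (z$j * z$k) * (if j = k then 1 else 0)) + (\<Sum>j<?d. \<Sum>k<?d. \<Sum>i<n. (?r i j * z$j) * (?r i k * z$k))"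
    by (simp add: distrib_left distrib_right sum.distrib sum_distrib_left sum_distrib_right mult_ac)
  also have "(\<Sum>j<?d. \<Sum>k<?d. (z$j * z$k) * (if j = k then 1 else 0)) = z \<bullet> z"
    unfolding sp_sum[OF z z] by (intro sum.cong refl) (simp add: delta_sum[where f="\<lambda>k. z$_ * z$k"])
  also have "(\<Sum>j<?d. \<Sum>k<?d. \<Sum>i<n. (?r i j * z$j) * (?r i k * z$k)) = (\<Sum>i<n. (\<Sum>j<?d. ?r i j * z $ j)\<^sup>2)"
  proof -
    have "(\<Sum>j<?d. \<Sum>k<?d. \<Sum>i<n. (?r i j * z$j) * (?r i k * z$k)) = (\<Sum>j<?d. \<Sum>i<n. \<Sum>k<?d. (?r i j * z$j) * (?r i k * z$k))"
      by (intro sum.cong refl sum.swap)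
    also have "\<dots> = (\<Sum>i<n. \<Sum>j<?d. \<Sum>k<?d. (?r i j * z$j) * (?r i k * z$k))" by (rule sum.swap)
    also have "\<dots> = (\<Sum>i<n. (\<Sum>j<?d. ?r i j * z $ j)\<^sup>2)"
      by (simp add: power2_eq_square sum_product)
    finally show ?thesis .
  qed
  finally show ?thesis .
qed

lemma Pinv_inv: "Pinv s u p q n * Pmat s u p q n = 1\<^sub>m (p+q) \<and> Pmat s u p q n \<in> carrier_mat (p+q) (p+q)"
proof -
  let ?A = "Pinv s u p q n"
  have A: "?A \<in> carrier_mat (p+q) (p+q)" by (rule Pinv_carrier)
  have "det ?A \<noteq> 0"
  proof
    assume "det ?A = 0"
    then obtain v where v: "v \<in> carrier_vec (p+q)" "v \<noteq> 0\<^sub>v (p+q)" "?A *\<^sub>v v = 0\<^sub>v (p+q)"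
      using det_0_iff_vec_prod_zero[OF A] by auto
    have "v \<bullet> (?A *\<^sub>v v) = 0" using v by simp
    then have "v \<bullet> v + (\<Sum>i<n. (\<Sum>j<p+q. regr s u p q i $ j * v $ j)\<^sup>2) = 0" using Pinv_qf[OF v(1)] by simp
    moreover have "0 \<le> (\<Sum>i<n. (\<Sum>j<p+q. regr s u p q i $ j * v $ j)\<^sup>2)" by (intro sum_nonneg) auto
    ultimately have "v \<bullet> v = 0" using self_sp_nonneg[OF v(1)] by linarith
    then show False using self_sp_zero[OF v(1)] v(2) by simp
  qed
  from det_non_zero_imp_unit[OF A this, of "()"]
  have U: "?A \<in> Units (ring_mat TYPE(real) (p+q) ())" .
  have "mat_inverse ?A \<noteq> None" using mat_inverse(1)[OF A, of "()"] U by auto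
  then obtain C where C: "mat_inverse ?A = Some C" by auto
  from mat_inverse(2)[OF A C] show ?thesis unfolding Pmat_def C by simp
qed

lemma ls_qf_bound:
  fixes s u :: "nat \<Rightarrow> real" and p q n :: nat
  defines "th \<equiv> theta_LS s u p q n"
  shows "th \<bullet> (Pinv s u p q n *\<^sub>v th) \<le> (\<Sum>i<n. (s (Suc i))\<^sup>2)" and "th \<in> carrier_vec (p+q)"
proof -
  let ?d = "p+q"
  let ?r = "\<lambda>i j. regr s u p q i $ j"
  let ?A = "Pinv s u p q n"
  define g where "g = vec ?d (\<lambda>j. \<Sum>i<n. ?r i j * s (Suc i))"
  have g: "g \<in> carrier_vec ?d" unfolding g_def by simp
  have C: "Pmat s u p q n \<in> carrier_mat ?d ?d" and AC: "?A * Pmat s u p q n = 1\<^sub>m ?d" using Pinv_inv by auto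
  have thd: "th = Pmat s u p q n *\<^sub>v g" unfolding th_def theta_LS_def g_def by simp
  show th: "th \<in> carrier_vec ?d" unfolding thd using C g by simp
  have Ath: "?A *\<^sub>v th = g" unfolding thd using C g AC Pinv_carrier
    by (metis assoc_mult_mat_vec one_mult_mat_vec)
  define F where "F = (\<Sum>i<n. (\<Sum>j<?d. ?r i j * th $ j)\<^sup>2)"
  define S where "S = (\<Sum>i<n. (s (Suc i))\<^sup>2)"
  have F0: "F \<ge> 0" unfolding F_def by (intro sum_nonneg) auto
  have S0: "S \<ge> 0" unfolding S_def by (intro sum_nonneg) auto
  have qf: "th \<bullet> (?A *\<^sub>v th) = th \<bullet> th + F" unfolding F_def by (rule Pinv_qf[OF th])
  have "th \<bullet> g = (\<Sum>j<?d. th $ j * (\<Sum>i<n. ?r i j * s (Suc i)))" using th g by (simp add: sp_sum g_def)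
  also have "\<dots> = (\<Sum>j<?d. \<Sum>i<n. th $ j * ?r i j * s (Suc i))" by (simp add: sum_distrib_left mult_ac)
  also have "\<dots> = (\<Sum>i<n. \<Sum>j<?d. th $ j * ?r i j * s (Suc i))" by (rule sum.swap)
  also have "\<dots> = (\<Sum>i<n. (\<Sum>j<?d. ?r i j * th $ j) * s (Suc i))" by (simp add: sum_distrib_right sum_distrib_left mult_ac)
  finally have tg: "th \<bullet> g = (\<Sum>i<n. (\<Sum>j<?d. ?r i j * th $ j) * s (Suc i))" .
  have "(th \<bullet> g)\<^sup>2 \<le> F * S" unfolding tg F_def S_def by (rule Cauchy_Schwarz_ineq_sum)
  also have "\<dots> \<le> (th \<bullet> (?A *\<^sub>v th)) * S" using qf self_sp_nonneg[OF th] S0 by (intro mult_right_mono) auto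
  finally have "(th \<bullet> (?A *\<^sub>v th))\<^sup>2 \<le> (th \<bullet> (?A *\<^sub>v th)) * S" unfolding Ath .
  moreover have "th \<bullet> (?A *\<^sub>v th) \<ge> 0" using qf self_sp_nonneg[OF th] F0 by simp
  ultimately show "th \<bullet> (?A *\<^sub>v th) \<le> (\<Sum>i<n. (s (Suc i))\<^sup>2)" unfolding S_def[symmetric]
    by (cases "th \<bullet> (?A *\<^sub>v th) = 0") (auto simp: power2_eq_square S0)
qed

lemma ls_bound:
  fixes s u :: "nat \<Rightarrow> real"
  assumes "p + q > 0"
  shows "Min {k. eigenvalue (Pinv s u p q n) k} * (theta_LS s u p q n \<bullet> theta_LS s u p q n) \<le> (\<Sum>i<n. (s (Suc i))\<^sup>2)"
  using sym_min_eig[OF Pinv_symm assms ls_qf_bound(2)] ls_qf_bound(1) by (rule order_trans)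


definition Afps :: "(nat \<Rightarrow> real) \<Rightarrow> complex fps" where
  "Afps a = Abs_fps (\<lambda>i. if i = 0 then 1 else complex_of_real (a i))"

lemma Afps_expansion:
  fixes a :: "nat \<Rightarrow> real"
  assumes a_zero: "\<And>i. i > p0 \<Longrightarrow> a i = 0"
  shows "(\<lambda>z. 1 + (\<Sum>i=1..p0. complex_of_real (a i) * z ^ i)) has_fps_expansion Afps a"
proof -
  have e: "(\<lambda>z. 1 + (\<Sum>i=1..p0. complex_of_real (a i) * z ^ i)) has_fps_expansion
      (1 + (\<Sum>i=1..p0. fps_const (complex_of_real (a i)) * fps_X ^ i))"
    by (intro fps_expansion_intros)
  have "1 + (\<Sum>i=1..p0. fps_const (complex_of_real (a i)) * fps_X ^ i) = Afps a"
  proof (rule fps_ext)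
    fix k
    have "(\<Sum>i=1..p0. fps_const (complex_of_real (a i)) * fps_X ^ i) $ k =
       (\<Sum>i\<in>{1..p0}. if i = k then complex_of_real (a i) else 0)"
      by (simp only: fps_sum_nth) (intro sum.cong refl, simp add: fps_X_power_nth)
    also have "\<dots> = (if k \<in> {1..p0} then complex_of_real (a k) else 0)" by simp
    finally show "(1 + (\<Sum>i=1..p0. fps_const (complex_of_real (a i)) * fps_X ^ i)) $ k = Afps a $ k"
      using a_zero[of k] by (auto simp: Afps_def not_le)
  qed
  with e show ?thesis by simp
qed

lemma stable_radius:
  fixes a :: "nat \<Rightarrow> real"
  assumes stable: "\<And>z::complex. norm z \<le> 1 \<Longrightarrow> 1 + (\<Sum>i=1..p0. complex_of_real (a i) * z ^ i) \<noteq> 0"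
  shows "\<exists>R>1. \<forall>z::complex. norm z < R \<longrightarrow> 1 + (\<Sum>i=1..p0. complex_of_real (a i) * z ^ i) \<noteq> 0"
proof -
  define f where "f = (\<lambda>z::complex. 1 + (\<Sum>i=1..p0. complex_of_real (a i) * z ^ i))"
  have cf: "continuous_on UNIV f" unfolding f_def by (intro continuous_intros)
  have cl: "closed {z. f z = 0}"
    using continuous_closed_preimage_constant[OF cf closed_UNIV, of 0] by simp
  have dis: "cball 0 1 \<inter> {z. f z = 0} = {}" using stable unfolding f_def by auto
  obtain d where d: "d > 0" "\<forall>x\<in>cball 0 1. \<forall>y\<in>{z. f z = 0}. d \<le> dist x y"
    using separate_compact_closed[OF compact_cball cl dis] by blast
  have "\<forall>z. norm z < 1 + d \<longrightarrow> f z \<noteq> 0"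
  proof (intro allI impI)
    fix z :: complex assume z: "norm z < 1 + d"
    show "f z \<noteq> 0"
    proof (cases "norm z \<le> 1")
      case True then show ?thesis using stable unfolding f_def by auto
    next
      case False
      define x where "x = z / of_real (norm z)"
      have nz: "norm z > 0" using False by (cases "z = 0") auto
      have x: "x \<in> cball 0 1" unfolding x_def using nz by (simp add: norm_divide)
      have "z - x = z * of_real (1 - 1 / norm z)" unfolding x_def using nz
        by (simp add: field_simps)
      then have "dist x z = norm (z * of_real (1 - 1 / norm z))"
        by (metis dist_norm dist_commute)
      also have "\<dots> = norm z * \<bar>1 - 1 / norm z\<bar>" by (simp only: norm_mult norm_of_real)
      also have "\<dots> = norm z - 1"
      proof -
        have "\<bar>1 - 1 / norm z\<bar> = 1 - 1 / norm z" using False nz by (intro abs_of_nonneg) (simp add: field_simps)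
        then show ?thesis using nz by (simp add: field_simps)
      qed
      finally have "dist x z < d" using z by simp
      then show ?thesis using d x by force
    qed
  qed
  then show ?thesis unfolding f_def using d by (intro exI[of _ "1 + d"]) auto
qed

lemma impulse:
  fixes a :: "nat \<Rightarrow> real"
  assumes stable: "\<And>z::complex. norm z \<le> 1 \<Longrightarrow> 1 + (\<Sum>i=1..p0. complex_of_real (a i) * z ^ i) \<noteq> 0"
    and a_zero: "\<And>i. i > p0 \<Longrightarrow> a i = 0"
  shows "summable (\<lambda>k. norm (inverse (Afps a) $ k))"
proof -
  define f where "f = (\<lambda>z::complex. 1 + (\<Sum>i=1..p0. complex_of_real (a i) * z ^ i))"
  obtain R where R: "R > 1" "\<And>z. norm z < R \<Longrightarrow> f z \<noteq> 0"
    using stable_radius[OF stable] unfolding f_def by blast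
  have A0: "Afps a $ 0 \<noteq> 0" by (simp add: Afps_def)
  have ex: "(\<lambda>z. inverse (f z)) has_fps_expansion inverse (Afps a)"
    unfolding f_def by (intro has_fps_expansion_inverse Afps_expansion a_zero A0)
  have "(\<lambda>z. inverse (f z)) holomorphic_on eball 0 (ereal R)"
    unfolding f_def using R(2)[unfolded f_def] by (intro holomorphic_intros) auto
  from holomorphic_on_imp_fps_conv_radius_ge[OF ex this]
  have "ereal R \<le> fps_conv_radius (inverse (Afps a))" .
  moreover have "ereal (norm (1::complex)) < ereal R" using R(1) by simp
  ultimately have "ereal (norm (1::complex)) < conv_radius (fps_nth (inverse (Afps a)))"
    unfolding fps_conv_radius_def by (rule order.strict_trans2[rotated])
  from abs_summable_in_conv_radius[OF this] show ?thesis by simp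
qed

lemma recur_sum:
  fixes a y :: "nat \<Rightarrow> real"
  assumes a_zero: "\<And>i. i > p0 \<Longrightarrow> a i = 0"
  shows "(\<Sum>i=1..p0. a i * (if i \<le> n then y (n - i) else 0)) = (\<Sum>i=1..n. a i * y (n - i))"
proof -
  define g where "g i = (if i \<le> n then a i * y (n - i) else 0)" for i
  have "(\<Sum>i=1..p0. a i * (if i \<le> n then y (n - i) else 0)) = (\<Sum>i=1..p0. g i)"
    unfolding g_def by (intro sum.cong) auto
  also have "\<dots> = (\<Sum>i=1..max n p0. g i)"
    by (intro sum.mono_neutral_left) (auto simp: g_def a_zero)
  also have "\<dots> = (\<Sum>i=1..n. g i)"
    by (intro sum.mono_neutral_right) (auto simp: g_def)
  also have "\<dots> = (\<Sum>i=1..n. a i * y (n - i))" unfolding g_def by (intro sum.cong) auto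
  finally show ?thesis .
qed

lemma conv_bound:
  fixes h v :: "nat \<Rightarrow> real" and Lh :: real
  assumes h0: "\<And>k. h k \<ge> 0" and hL: "\<And>n. (\<Sum>k<n. h k) \<le> Lh"
  shows "(\<Sum>n<N. (\<Sum>k\<le>n. h k * \<bar>v (n - k)\<bar>)\<^sup>2) \<le> Lh\<^sup>2 * (\<Sum>n<N. (v n)\<^sup>2)"
proof -
  have L0: "Lh \<ge> 0" using hL[of 0] by simp
  have "(\<Sum>k\<le>n. h k * \<bar>v (n - k)\<bar>)\<^sup>2 \<le> Lh * (\<Sum>k\<le>n. h k * (v (n - k))\<^sup>2)" for n
  proof -
    have "(\<Sum>k\<le>n. h k * \<bar>v (n - k)\<bar>)\<^sup>2 = (\<Sum>k\<le>n. sqrt (h k) * (sqrt (h k) * \<bar>v (n - k)\<bar>))\<^sup>2"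
      using h0 by (simp add: real_sqrt_mult_self mult.assoc[symmetric])
    also have "\<dots> \<le> (\<Sum>k\<le>n. (sqrt (h k))\<^sup>2) * (\<Sum>k\<le>n. (sqrt (h k) * \<bar>v (n - k)\<bar>)\<^sup>2)"
      by (rule Cauchy_Schwarz_ineq_sum)
    also have "\<dots> = (\<Sum>k\<le>n. h k) * (\<Sum>k\<le>n. h k * (v (n - k))\<^sup>2)"
      using h0 by (simp add: power_mult_distrib)
    also have "\<dots> \<le> Lh * (\<Sum>k\<le>n. h k * (v (n - k))\<^sup>2)"
      using hL[of "Suc n"] h0 by (intro mult_right_mono sum_nonneg) (auto simp: lessThan_Suc_atMost)
    finally show ?thesis .
  qed
  then have "(\<Sum>n<N. (\<Sum>k\<le>n. h k * \<bar>v (n - k)\<bar>)\<^sup>2) \<le> (\<Sum>n<N. Lh * (\<Sum>k\<le>n. h k * (v (n - k))\<^sup>2))"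
    by (intro sum_mono)
  also have "\<dots> = Lh * (\<Sum>n<N. \<Sum>k\<le>n. h k * (v (n - k))\<^sup>2)" by (simp add: sum_distrib_left)
  also have "(\<Sum>n<N. \<Sum>k\<le>n. h k * (v (n - k))\<^sup>2) = (\<Sum>(i,j)\<in>{(i,j). i+j < N}. h i * (v j)\<^sup>2)"
    by (rule sum.triangle_reindex[symmetric])
  also have "\<dots> \<le> (\<Sum>(i,j)\<in>{..<N} \<times> {..<N}. h i * (v j)\<^sup>2)"
    using h0 by (intro sum_mono2) auto
  also have "\<dots> = (\<Sum>i<N. h i) * (\<Sum>j<N. (v j)\<^sup>2)"
    by (simp add: sum_product sum.cartesian_product)
  also have "\<dots> \<le> Lh * (\<Sum>j<N. (v j)\<^sup>2)"
    using hL[of N] by (intro mult_right_mono sum_nonneg) auto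
  finally show ?thesis using L0 by (simp add: mult_left_mono power2_eq_square mult.assoc)
qed

lemma filter_bound:
  fixes a :: "nat \<Rightarrow> real"
  assumes stable: "\<And>z::complex. norm z \<le> 1 \<Longrightarrow> 1 + (\<Sum>i=1..p0. complex_of_real (a i) * z ^ i) \<noteq> 0"
    and a_zero: "\<And>i. i > p0 \<Longrightarrow> a i = 0"
  shows "\<exists>L\<ge>0. \<forall>y v :: nat \<Rightarrow> real.
     (\<forall>n. y n = (\<Sum>i=1..p0. - a i * (if i \<le> n then y (n - i) else 0)) + v n) \<longrightarrow>
     (\<forall>N. (\<Sum>n<N. (y n)\<^sup>2) \<le> L * (\<Sum>n<N. (v n)\<^sup>2))"
proof -
  define H where "H = inverse (Afps a)"
  define h where "h k = norm (H $ k)" for k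
  have sh: "summable h" unfolding h_def H_def by (rule impulse[OF stable a_zero])
  define Lh where "Lh = suminf h"
  have h0: "h k \<ge> 0" for k unfolding h_def by simp
  have hL: "(\<Sum>k<n. h k) \<le> Lh" for n unfolding Lh_def using sh h0 by (intro sum_le_suminf) auto
  have HA: "H * Afps a = 1" unfolding H_def by (rule inverse_mult_eq_1) (simp add: Afps_def)
  show ?thesis
  proof (intro exI[of _ "Lh\<^sup>2"] conjI allI impI)
    show "Lh\<^sup>2 \<ge> 0" by simp
    fix y v :: "nat \<Rightarrow> real" and N
    assume rec: "\<forall>n. y n = (\<Sum>i=1..p0. - a i * (if i \<le> n then y (n - i) else 0)) + v n"
    define Y where "Y = Abs_fps (\<lambda>n. complex_of_real (y n))"
    define V where "V = Abs_fps (\<lambda>n. complex_of_real (v n))"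
    have "Afps a * Y = V"
    proof (rule fps_ext)
      fix n
      have r: "y n + (\<Sum>i=1..n. a i * y (n - i)) = v n"
        using rec[rule_format, of n] recur_sum[OF a_zero, where y=y and n=n]
        by (simp add: sum_negf)
      have "(Afps a * Y) $ n = (\<Sum>i=0..n. (if i = 0 then 1 else complex_of_real (a i)) * complex_of_real (y (n - i)))"
        by (simp add: fps_mult_nth Afps_def Y_def)
      also have "\<dots> = complex_of_real (y n) + (\<Sum>i=Suc 0..n. complex_of_real (a i) * complex_of_real (y (n - i)))"
        by (subst sum.atLeast_Suc_atMost) auto
      also have "\<dots> = complex_of_real (y n + (\<Sum>i=1..n. a i * y (n - i)))" by simp
      also have "\<dots> = V $ n" using r by (simp add: V_def)
      finally show "(Afps a * Y) $ n = V $ n" .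
    qed
    then have YHV: "Y = H * V" using HA by (metis mult.assoc mult_1)
    have yb: "\<bar>y n\<bar> \<le> (\<Sum>k\<le>n. h k * \<bar>v (n - k)\<bar>)" for n
    proof -
      have "\<bar>y n\<bar> = norm (Y $ n)" by (simp add: Y_def)
      also have "\<dots> = norm (\<Sum>k=0..n. H $ k * V $ (n - k))" unfolding YHV by (simp add: fps_mult_nth)
      also have "\<dots> \<le> (\<Sum>k=0..n. norm (H $ k * V $ (n - k)))" by (rule norm_sum)
      also have "\<dots> = (\<Sum>k\<le>n. h k * \<bar>v (n - k)\<bar>)"
        by (simp add: h_def V_def norm_mult atLeast0AtMost)
      finally show ?thesis .
    qed
    have "(\<Sum>n<N. (y n)\<^sup>2) \<le> (\<Sum>n<N. (\<Sum>k\<le>n. h k * \<bar>v (n - k)\<bar>)\<^sup>2)"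
    proof (intro sum_mono)
      fix n
      have "\<bar>y n\<bar>\<^sup>2 \<le> (\<Sum>k\<le>n. h k * \<bar>v (n - k)\<bar>)\<^sup>2" using yb[of n] by (intro power_mono) auto
      then show "(y n)\<^sup>2 \<le> (\<Sum>k\<le>n. h k * \<bar>v (n - k)\<bar>)\<^sup>2" by simp
    qed
    also have "\<dots> \<le> Lh\<^sup>2 * (\<Sum>n<N. (v n)\<^sup>2)" by (rule conv_bound[OF h0 hL])
    finally show "(\<Sum>n<N. (y n)\<^sup>2) \<le> Lh\<^sup>2 * (\<Sum>n<N. (v n)\<^sup>2)" .
  qed
qed


lemma std_normal_exp4: "std_normal_density x * exp (x\<^sup>2 / 4) = sqrt 2 * normal_density 0 (sqrt 2) x"
proof -
  have e: "exp (- x\<^sup>2 / 2) * exp (x\<^sup>2 / 4) = exp (- x\<^sup>2 / 4)" by (simp add: exp_add[symmetric])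
  have s: "sqrt (2 * pi * (sqrt 2)\<^sup>2) = sqrt 2 * sqrt (2 * pi)" by (simp add: real_sqrt_mult)
  show ?thesis unfolding std_normal_density_def normal_density_def s
    using e by (simp add: field_simps)
qed

context prob_space begin

lemma normal_mgf4:
  assumes X: "distributed M lborel X (\<lambda>x. ennreal (std_normal_density x))"
  shows "(\<integral>\<^sup>+\<omega>. ennreal (exp ((X \<omega>)\<^sup>2 / 4)) \<partial>M) = ennreal (sqrt 2)"
proof -
  have "(\<integral>\<^sup>+\<omega>. ennreal (exp ((X \<omega>)\<^sup>2 / 4)) \<partial>M) =
      (\<integral>\<^sup>+x. ennreal (std_normal_density x) * ennreal (exp (x\<^sup>2 / 4)) \<partial>lborel)"
    by (rule distributed_nn_integral[OF X, symmetric]) simp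
  also have "\<dots> = (\<integral>\<^sup>+x. ennreal (sqrt 2) * ennreal (normal_density 0 (sqrt 2) x) \<partial>lborel)"
    by (intro nn_integral_cong) (simp add: ennreal_mult'[symmetric] std_normal_exp4 flip: ennreal_mult)
  also have "\<dots> = ennreal (sqrt 2) * (\<integral>\<^sup>+x. ennreal (normal_density 0 (sqrt 2) x) \<partial>lborel)"
    by (rule nn_integral_cmult) simp
  also have "(\<integral>\<^sup>+x. ennreal (normal_density 0 (sqrt 2) x) \<partial>lborel) = 1"
    by (subst nn_integral_eq_integral) auto
  finally show ?thesis by simp
qed

lemma sumsq_tail:
  assumes indep: "indep_vars (\<lambda>_. borel) w UNIV"
    and distr: "\<And>n. distributed M lborel (w n) (\<lambda>x. ennreal (std_normal_density x))"
  shows "measure M {\<omega>\<in>space M. 4 * real N \<le> (\<Sum>n<N. (w n \<omega>)\<^sup>2)} \<le> (sqrt 2 / exp 1) ^ N"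
proof -
  have wm[measurable]: "w n \<in> borel_measurable M" for n
    using distributed_measurable[OF distr[of n]] by simp
  have "emeasure M {\<omega>\<in>space M. 4 * real N \<le> (\<Sum>n<N. (w n \<omega>)\<^sup>2)} \<le>
     ennreal (exp (- (1/4) * (4 * real N))) * (\<integral>\<^sup>+\<omega>\<in>space M. ennreal (exp ((1/4) * (\<Sum>n<N. (w n \<omega>)\<^sup>2))) \<partial>M)"
    by (intro Chernoff_ineq_nn_integral_ge) auto
  also have "(\<integral>\<^sup>+\<omega>\<in>space M. ennreal (exp ((1/4) * (\<Sum>n<N. (w n \<omega>)\<^sup>2))) \<partial>M) =
      (\<integral>\<^sup>+\<omega>. (\<Prod>n\<in>{..<N}. ennreal (exp ((w n \<omega>)\<^sup>2 / 4))) \<partial>M)"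
    by (intro nn_integral_cong) (simp add: sum_distrib_left exp_sum prod_ennreal)
  also have "\<dots> = (\<Prod>n\<in>{..<N}. \<integral>\<^sup>+\<omega>. ennreal (exp ((w n \<omega>)\<^sup>2 / 4)) \<partial>M)"
    by (intro indep_vars_nn_integral indep_vars_compose2[OF indep_vars_subset[OF indep]]) auto
  also have "\<dots> = (\<Prod>n\<in>{..<N}. ennreal (sqrt 2))" by (simp add: normal_mgf4[OF distr])
  also have "\<dots> = ennreal (sqrt 2 ^ N)" by (simp add: prod_ennreal ennreal_power)
  also have "ennreal (exp (- (1/4) * (4 * real N))) * ennreal (sqrt 2 ^ N) = ennreal ((sqrt 2 / exp 1) ^ N)"
    by (simp add: ennreal_mult'[symmetric] power_divide exp_of_nat_mult[symmetric] exp_minus field_simps flip: ennreal_mult)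
  finally show ?thesis by (simp add: emeasure_eq_measure ennreal_le_iff)
qed

lemma sumsq_AE:
  assumes indep: "indep_vars (\<lambda>_. borel) w UNIV"
    and distr: "\<And>n. distributed M lborel (w n) (\<lambda>x. ennreal (std_normal_density x))"
  shows "AE \<omega> in M. \<forall>\<^sub>F N in sequentially. (\<Sum>n<N. (w n \<omega>)\<^sup>2) < 4 * real N"
proof -
  have wm[measurable]: "w n \<in> borel_measurable M" for n
    using distributed_measurable[OF distr[of n]] by simp
  define A where "A N = {\<omega>\<in>space M. 4 * real N \<le> (\<Sum>n<N. (w n \<omega>)\<^sup>2)}" for N
  have Am: "A N \<in> sets M" for N unfolding A_def by measurable
  have q: "sqrt 2 / exp 1 < 1"
  proof -
    have "sqrt 2 < sqrt (2\<^sup>2)" by (simp only: real_sqrt_less_iff) simp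
    then have "sqrt 2 < 2" by simp
    also have "2 < exp (1::real)" using exp_ge_add_one_self_aux[of 1] exp_gt_one[of 1] by (smt (verit) exp_less_cancel_iff ln_2_less_1 exp_ln)
    finally show ?thesis by simp
  qed
  have "summable (\<lambda>N. measure M (A N))"
  proof (rule summable_comparison_test)
    show "\<exists>N0. \<forall>N\<ge>N0. norm (measure M (A N)) \<le> (sqrt 2 / exp 1) ^ N"
      unfolding A_def using sumsq_tail[OF indep distr] by auto
    show "summable (\<lambda>N. (sqrt 2 / exp 1) ^ N)" using q by (intro summable_geometric) simp
  qed
  from borel_cantelli_AE1[OF Am _ this] have "AE \<omega> in M. \<forall>\<^sub>F N in sequentially. \<omega> \<in> space M - A N"
    by (simp add: emeasure_eq_measure)
  then show ?thesis unfolding A_def by (auto elim!: eventually_mono simp: not_le)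
qed

lemma unif_AE:
  fixes u :: "nat \<Rightarrow> 'a \<Rightarrow> real"
  assumes "delta > 0" and distr: "\<And>n. distributed M lborel (u n) (\<lambda>x. ennreal (indicator {-delta..delta} x / (2 * delta)))"
  shows "AE \<omega> in M. \<forall>n. \<bar>u n \<omega>\<bar> \<le> delta"
proof -
  have h: "AE \<omega> in M. \<bar>u n \<omega>\<bar> \<le> delta" for n
  proof -
    have "emeasure M (u n -` (- {-delta..delta}) \<inter> space M) =
        (\<integral>\<^sup>+x\<in>(- {-delta..delta}). ennreal (indicator {-delta..delta} x / (2 * delta)) \<partial>lborel)"
      by (rule distributed_emeasure[OF distr]) simp
    also have "\<dots> = 0" by (intro nn_integral_zero') (auto split: split_indicator)
    finally have "emeasure M (u n -` (- {-delta..delta}) \<inter> space M) = 0" .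
    then have "(u n -` (- {-delta..delta}) \<inter> space M) \<in> null_sets M"
      using distributed_measurable[OF distr[of n]] by (auto simp: null_sets_def)
    then show ?thesis by (rule AE_I') auto
  qed
  show ?thesis by (rule AE_all_countable[THEN iffD2]) (intro allI h)
qed

end


lemma sq_add_le: fixes a b :: real shows "(a + b)\<^sup>2 \<le> 2 * a\<^sup>2 + 2 * b\<^sup>2"
proof -
  have "0 \<le> (a - b)\<^sup>2" by simp
  moreover have "(a + b)\<^sup>2 = a\<^sup>2 + b\<^sup>2 + 2 * a * b" by (rule power2_sum)
  moreover have "(a - b)\<^sup>2 = a\<^sup>2 + b\<^sup>2 - 2 * a * b" by (rule power2_diff)
  ultimately show ?thesis by linarith
qed

lemma sq_diff_le: fixes a b :: real shows "(a - b)\<^sup>2 \<le> 2 * a\<^sup>2 + 2 * b\<^sup>2"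
  using sq_add_le[of a "-b"] by simp

lemma quant_sq: assumes "eps > 0" shows "(quant eps x)\<^sup>2 \<le> 2 * x\<^sup>2 + eps\<^sup>2 / 2"
proof -
  define f where "f = real_of_int \<lfloor>x / eps + 1/2\<rfloor>"
  have f1: "f \<le> x / eps + 1/2" unfolding f_def by linarith
  have f2: "x / eps + 1/2 < f + 1" unfolding f_def by linarith
  have "eps * f \<le> eps * (x / eps + 1/2)" using f1 assms by (intro mult_left_mono) auto
  also have "\<dots> = x + eps / 2" using assms by (simp add: field_simps)
  finally have "eps * f \<le> x + eps / 2" .
  moreover have "x - eps / 2 < eps * f"
  proof -
    have "eps * (x / eps + 1/2) < eps * (f + 1)" using mult_strict_left_mono[OF f2 assms] .
    moreover have "eps * (x / eps + 1/2) = x + eps / 2" using assms by (simp add: field_simps)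
    moreover have "eps * (f + 1) = eps * f + eps" by (simp add: algebra_simps)
    ultimately show ?thesis by linarith
  qed
  ultimately have d0: "-(eps/2) \<le> eps * f - x \<and> eps * f - x \<le> eps/2" by linarith
  have qf: "quant eps x = eps * f" unfolding quant_def f_def by simp
  have d: "\<bar>quant eps x - x\<bar> \<le> eps / 2" unfolding qf abs_le_iff using d0 by linarith
  have "(quant eps x)\<^sup>2 = (x + (quant eps x - x))\<^sup>2" by simp
  also have "\<dots> \<le> 2 * x\<^sup>2 + 2 * (quant eps x - x)\<^sup>2"
    by (rule sq_add_le)
  also have "(quant eps x - x)\<^sup>2 \<le> (eps / 2)\<^sup>2" using power_mono[OF d abs_ge_zero, of 2] by simp
  finally show ?thesis by (simp add: power_divide)
qed

lemma hat_sq: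
  fixes s u :: "nat \<Rightarrow> real"
  assumes "p \<le> p0" "k < p0 + q"
  shows "(theta_hat s u p0 p q n $ k)\<^sup>2 \<le> theta_LS s u p q n \<bullet> theta_LS s u p q n"
proof -
  have th: "theta_LS s u p q n \<in> carrier_vec (p+q)" by (rule ls_qf_bound(2))
  show ?thesis
  proof (cases "k < p")
    case True
    then show ?thesis using assms sq_le_norm[OF th, of k] by (simp add: theta_hat_def)
  next
    case False
    show ?thesis
    proof (cases "k < p0")
      case True
      then show ?thesis using False assms self_sp_nonneg[OF th] by (simp add: theta_hat_def)
    next
      case False2: False
      have "k - p0 + p < p + q" using assms False2 by simp
      then show ?thesis using False False2 assms sq_le_norm[OF th, of "k - p0 + p"] by (simp add: theta_hat_def)
    qed
  qed
qed

lemma enorm_bound: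
  fixes s u :: "nat \<Rightarrow> real"
  assumes "p \<le> p0"
  shows "enorm (theta_bar a b p0 q - theta_hat s u p0 p q n) \<le>
    sqrt (2 * (\<Sum>k<p0+q. (theta_bar a b p0 q $ k)\<^sup>2) + 2 * real (p0+q) * (theta_LS s u p q n \<bullet> theta_LS s u p q n))"
proof -
  let ?tb = "theta_bar a b p0 q" and ?th = "theta_hat s u p0 p q n" and ?t = "theta_LS s u p q n"
  have dims: "dim_vec ?th = p0 + q" "dim_vec ?tb = p0 + q" by (simp_all add: theta_hat_def theta_bar_def)
  have "(\<Sum>k<p0+q. ((?tb - ?th) $ k)\<^sup>2) \<le> (\<Sum>k<p0+q. 2 * (?tb $ k)\<^sup>2 + 2 * (?t \<bullet> ?t))"
  proof (intro sum_mono)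
    fix k assume k: "k \<in> {..<p0+q}"
    have "((?tb - ?th) $ k)\<^sup>2 = (?tb $ k - ?th $ k)\<^sup>2" using k dims by simp
    also have "\<dots> \<le> 2 * (?tb $ k)\<^sup>2 + 2 * (?th $ k)\<^sup>2"
      by (rule sq_diff_le)
    also have "\<dots> \<le> 2 * (?tb $ k)\<^sup>2 + 2 * (?t \<bullet> ?t)" using hat_sq[OF assms, of k q s u n] k by simp
    finally show "((?tb - ?th) $ k)\<^sup>2 \<le> 2 * (?tb $ k)\<^sup>2 + 2 * (?t \<bullet> ?t)" .
  qed
  also have "\<dots> = 2 * (\<Sum>k<p0+q. (?tb $ k)\<^sup>2) + 2 * real (p0+q) * (?t \<bullet> ?t)"
    by (simp add: sum.distrib sum_distrib_left)
  finally show ?thesis unfolding enorm_def using dims by (simp add: real_sqrt_le_mono)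
qed

theorem lemma3:
  fixes M :: "'w measure"
    and a b :: "nat \<Rightarrow> real" and p0 q0 pstar qstar p :: nat
    and w u y :: "nat \<Rightarrow> 'w \<Rightarrow> real"
    and eps delta c :: real
  assumes prob: "prob_space M"
    (* noise i.i.d. N(0,1) *)
    and w_indep: "prob_space.indep_vars M (\<lambda>_. borel) w UNIV"
    and w_distr: "\<And>n. distributed M lborel (w n) (\<lambda>x. ennreal (std_normal_density x))"
    (* (A1) input i.i.d. uniform on [-delta, delta] *)
    and delta_pos: "delta > 0"
    and u_indep: "prob_space.indep_vars M (\<lambda>_. borel) u UNIV"
    and u_distr: "\<And>n. distributed M lborel (u n)
                     (\<lambda>x. ennreal (indicator {-delta..delta} x / (2 * delta)))"
    (* system: y_n = -a_1 y_{n-1} - ... + b_1 u_{n-1} + ... + w_n, zero initial conditions *)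
    and sys: "\<And>n \<omega>. y n \<omega> =
        (\<Sum>i=1..p0. - a i * (if i \<le> n then y (n - i) \<omega> else 0))
      + (\<Sum>j=1..q0. b j * (if j \<le> n then u (n - j) \<omega> else 0)) + w n \<omega>"
    and a_zero: "\<And>i. i > p0 \<Longrightarrow> a i = 0"
    and b_zero: "\<And>j. j > q0 \<Longrightarrow> b j = 0"
    and q0_pos: "q0 \<ge> 1"
    and a_lead: "p0 > 0 \<Longrightarrow> a p0 \<noteq> 0"
    and b_lead: "b q0 \<noteq> 0"
    (* (A2) stability *)
    and stable: "\<And>z::complex. norm z \<le> 1 \<Longrightarrow>
                   1 + (\<Sum>i=1..p0. complex_of_real (a i) * z ^ i) \<noteq> 0"
    (* (A3) *)
    and c_pos: "c > 0"
    and a_bound: "\<And>i. \<bar>a i\<bar> \<le> c" and b_bound: "\<And>j. \<bar>b j\<bar> \<le> c"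
    and eps_pos: "eps > 0"
    and eps_small: "eps < 1 / (2 * (1 + real p0 * c))"
    (* (A4) *)
    and pstar_pos: "pstar > 0" and qstar_pos: "qstar > 0"
    and p0_le: "p0 \<le> pstar" and q0_le: "q0 \<le> qstar"
    (* (A5) *)
    and PE: "\<exists>c1>0. \<forall>p'\<le>pstar. AE \<omega> in M. \<forall>\<^sub>F n in sequentially.
               lambda_min (\<lambda>i. quant eps (y i \<omega>)) (\<lambda>i. u i \<omega>) p' qstar n \<ge> c1 * (real n + 1)"
    and p_le: "p \<le> p0"
  shows "\<exists>\<gamma>. AE \<omega> in M. \<forall>\<^sub>F n in sequentially.
           enorm (theta_bar a b p0 qstar
                  - theta_hat (\<lambda>i. quant eps (y i \<omega>)) (\<lambda>i. u i \<omega>) p0 p qstar n) \<le> \<gamma>"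
proof -
  interpret P: prob_space M by (rule prob)
  obtain c1 where c1: "c1 > 0" and PEc: "\<forall>p'\<le>pstar. AE \<omega> in M. \<forall>\<^sub>F n in sequentially.
       lambda_min (\<lambda>i. quant eps (y i \<omega>)) (\<lambda>i. u i \<omega>) p' qstar n \<ge> c1 * (real n + 1)"
    using PE by blast
  have PEp: "AE \<omega> in M. \<forall>\<^sub>F n in sequentially.
       lambda_min (\<lambda>i. quant eps (y i \<omega>)) (\<lambda>i. u i \<omega>) p qstar n \<ge> c1 * (real n + 1)"
    using PEc p_le p0_le by auto
  obtain L where L0: "L \<ge> 0" and L: "\<And>yy vv :: nat \<Rightarrow> real.
     (\<forall>n. yy n = (\<Sum>i=1..p0. - a i * (if i \<le> n then yy (n - i) else 0)) + vv n) \<Longrightarrow>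
     (\<forall>N. (\<Sum>n<N. (yy n)\<^sup>2) \<le> L * (\<Sum>n<N. (vv n)\<^sup>2))"
    using filter_bound[OF stable a_zero] by blast
  define K1 where "K1 = L * (2 * (real q0 * c * delta)\<^sup>2 + 8)"
  define K2 where "K2 = 2 * K1 + eps\<^sup>2 / 2"
  define TB where "TB = (\<Sum>k<p0+qstar. (theta_bar a b p0 qstar $ k)\<^sup>2)"
  define \<gamma> where "\<gamma> = sqrt (2 * TB + 2 * real (p0+qstar) * (2 * K2 / c1))"
  have AEu: "AE \<omega> in M. \<forall>n. \<bar>u n \<omega>\<bar> \<le> delta" by (rule P.unif_AE[OF delta_pos u_distr])
  have AEw: "AE \<omega> in M. \<forall>\<^sub>F N in sequentially. (\<Sum>n<N. (w n \<omega>)\<^sup>2) < 4 * real N"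
    by (rule P.sumsq_AE[OF w_indep w_distr])
  have "AE \<omega> in M. \<forall>\<^sub>F n in sequentially.
           enorm (theta_bar a b p0 qstar
                  - theta_hat (\<lambda>i. quant eps (y i \<omega>)) (\<lambda>i. u i \<omega>) p0 p qstar n) \<le> \<gamma>"
    using AEu AEw PEp
  proof eventually_elim
    fix \<omega>
    assume u\<omega>: "\<forall>n. \<bar>u n \<omega>\<bar> \<le> delta"
      and w\<omega>: "\<forall>\<^sub>F N in sequentially. (\<Sum>n<N. (w n \<omega>)\<^sup>2) < 4 * real N"
      and l\<omega>: "\<forall>\<^sub>F n in sequentially. lambda_min (\<lambda>i. quant eps (y i \<omega>)) (\<lambda>i. u i \<omega>) p qstar n \<ge> c1 * (real n + 1)"
    define ss where "ss i = quant eps (y i \<omega>)" for i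
    define uu where "uu i = u i \<omega>" for i
    define vv where "vv n = (\<Sum>j=1..q0. b j * (if j \<le> n then u (n - j) \<omega> else 0)) + w n \<omega>" for n
    have rec: "\<forall>n. y n \<omega> = (\<Sum>i=1..p0. - a i * (if i \<le> n then y (n - i) \<omega> else 0)) + vv n"
    proof
      fix n show "y n \<omega> = (\<Sum>i=1..p0. - a i * (if i \<le> n then y (n - i) \<omega> else 0)) + vv n"
        using sys[of n \<omega>] unfolding vv_def by (simp only: add.assoc)
    qed
    have Ly: "(\<Sum>n<N. (y n \<omega>)\<^sup>2) \<le> L * (\<Sum>n<N. (vv n)\<^sup>2)" for N
      using L[of "\<lambda>n. y n \<omega>" vv] rec by blast
    have vb: "(vv n)\<^sup>2 \<le> 2 * (real q0 * c * delta)\<^sup>2 + 2 * (w n \<omega>)\<^sup>2" for n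
    proof -
      define B where "B = (\<Sum>j=1..q0. b j * (if j \<le> n then u (n - j) \<omega> else 0))"
      have "\<bar>B\<bar> \<le> (\<Sum>j=1..q0. \<bar>b j * (if j \<le> n then u (n - j) \<omega> else 0)\<bar>)" unfolding B_def by (rule sum_abs)
      also have "\<dots> \<le> (\<Sum>j=1..q0. c * delta)"
      proof (intro sum_mono)
        fix j
        have "\<bar>if j \<le> n then u (n - j) \<omega> else 0\<bar> \<le> delta" using u\<omega> delta_pos by auto
        then show "\<bar>b j * (if j \<le> n then u (n - j) \<omega> else 0)\<bar> \<le> c * delta"
          unfolding abs_mult using b_bound[of j] by (intro mult_mono) auto
      qed
      also have "\<dots> = real q0 * c * delta" by simp
      finally have Bb: "\<bar>B\<bar> \<le> real q0 * c * delta" .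
      have "\<bar>B\<bar>\<^sup>2 \<le> (real q0 * c * delta)\<^sup>2" using power_mono[OF Bb abs_ge_zero, of 2] .
      then have "B\<^sup>2 \<le> (real q0 * c * delta)\<^sup>2" by simp
      moreover have "(B + w n \<omega>)\<^sup>2 \<le> 2 * B\<^sup>2 + 2 * (w n \<omega>)\<^sup>2"
        by (rule sq_add_le)
      ultimately show ?thesis unfolding vv_def B_def[symmetric] by linarith
    qed
    have yb: "\<forall>\<^sub>F N in sequentially. (\<Sum>n<N. (y n \<omega>)\<^sup>2) \<le> K1 * real N"
      using w\<omega>
    proof eventually_elim
      fix N assume wN: "(\<Sum>n<N. (w n \<omega>)\<^sup>2) < 4 * real N"
      have "(\<Sum>n<N. (vv n)\<^sup>2) \<le> (\<Sum>n<N. 2 * (real q0 * c * delta)\<^sup>2 + 2 * (w n \<omega>)\<^sup>2)"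
        by (intro sum_mono vb)
      also have "\<dots> = 2 * (real q0 * c * delta)\<^sup>2 * real N + 2 * (\<Sum>n<N. (w n \<omega>)\<^sup>2)"
        by (simp add: sum.distrib sum_distrib_left)
      also have "\<dots> \<le> (2 * (real q0 * c * delta)\<^sup>2 + 8) * real N" using wN by (simp add: algebra_simps)
      finally have "(\<Sum>n<N. (vv n)\<^sup>2) \<le> (2 * (real q0 * c * delta)\<^sup>2 + 8) * real N" .
      then have "L * (\<Sum>n<N. (vv n)\<^sup>2) \<le> L * ((2 * (real q0 * c * delta)\<^sup>2 + 8) * real N)"
        using L0 by (rule mult_left_mono)
      then show "(\<Sum>n<N. (y n \<omega>)\<^sup>2) \<le> K1 * real N" using Ly[of N] unfolding K1_def by (simp add: mult.assoc)
    qed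
    then obtain N1 where N1: "\<And>N. N \<ge> N1 \<Longrightarrow> (\<Sum>n<N. (y n \<omega>)\<^sup>2) \<le> K1 * real N"
      by (auto simp: eventually_sequentially)
    obtain N2 where N2: "\<And>n. n \<ge> N2 \<Longrightarrow> lambda_min ss uu p qstar n \<ge> c1 * (real n + 1)"
      using l\<omega> unfolding ss_def uu_def by (auto simp: eventually_sequentially)
    have sb: "(\<Sum>i<n. (ss (Suc i))\<^sup>2) \<le> K2 * (real n + 1)" if n: "n \<ge> N1" for n
    proof -
      have "(\<Sum>i<n. (ss (Suc i))\<^sup>2) \<le> (\<Sum>i<Suc n. (ss i)\<^sup>2)"
        unfolding sum.lessThan_Suc_shift by simp
      also have "\<dots> \<le> (\<Sum>i<Suc n. 2 * (y i \<omega>)\<^sup>2 + eps\<^sup>2 / 2)"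
        unfolding ss_def by (intro sum_mono quant_sq eps_pos)
      also have "\<dots> = 2 * (\<Sum>i<Suc n. (y i \<omega>)\<^sup>2) + (real n + 1) * (eps\<^sup>2 / 2)"
        by (simp add: sum.distrib sum_distrib_left)
      also have "\<dots> \<le> 2 * (K1 * real (Suc n)) + (real n + 1) * (eps\<^sup>2 / 2)"
        using N1[of "Suc n"] n by simp
      also have "\<dots> = K2 * (real n + 1)" unfolding K2_def by (simp add: algebra_simps)
      finally show ?thesis .
    qed
    have K2: "K2 \<ge> 0"
    proof -
      have "0 \<le> (\<Sum>i<Suc N1. (y i \<omega>)\<^sup>2)" by (intro sum_nonneg) auto
      also have "\<dots> \<le> K1 * real (Suc N1)" by (rule N1) simp
      finally have "K1 \<ge> 0" by (simp add: zero_le_mult_iff)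
      then show ?thesis unfolding K2_def by simp
    qed
    show "\<forall>\<^sub>F n in sequentially. enorm (theta_bar a b p0 qstar - theta_hat (\<lambda>i. quant eps (y i \<omega>)) (\<lambda>i. u i \<omega>) p0 p qstar n) \<le> \<gamma>"
      unfolding eventually_sequentially
    proof (intro exI[of _ "Suc (max N1 N2)"] allI impI)
      fix n assume n: "Suc (max N1 N2) \<le> n"
      define th where "th = theta_LS ss uu p qstar n"
      have lam: "lambda_min ss uu p qstar (n - 1) \<ge> c1 * real n"
        using N2[of "n - 1"] n by (simp add: of_nat_diff)
      have "lambda_min ss uu p qstar (n - 1) = Min {k. eigenvalue (Pinv ss uu p qstar n) k}"
        unfolding lambda_min_def using n by simp
      with lam have lam': "Min {k. eigenvalue (Pinv ss uu p qstar n) k} \<ge> c1 * real n" by simp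
      have "c1 * real n * (th \<bullet> th) \<le> Min {k. eigenvalue (Pinv ss uu p qstar n) k} * (th \<bullet> th)"
        using lam' self_sp_nonneg[OF ls_qf_bound(2)] unfolding th_def by (intro mult_right_mono) auto
      also have "\<dots> \<le> (\<Sum>i<n. (ss (Suc i))\<^sup>2)" unfolding th_def
        by (rule ls_bound) (use qstar_pos in simp)
      also have "\<dots> \<le> K2 * (real n + 1)" using sb n by simp
      also have "\<dots> \<le> K2 * (2 * real n)" using n K2 by (intro mult_left_mono) auto
      finally have "c1 * real n * (th \<bullet> th) \<le> (2 * K2) * real n" by (simp add: algebra_simps)
      then have "c1 * (th \<bullet> th) \<le> 2 * K2" using n by (simp add: mult.commute mult.left_commute)
      then have thb: "th \<bullet> th \<le> 2 * K2 / c1" using c1 by (simp add: field_simps)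
      have "enorm (theta_bar a b p0 qstar - theta_hat ss uu p0 p qstar n) \<le>
         sqrt (2 * TB + 2 * real (p0+qstar) * (th \<bullet> th))"
        unfolding TB_def th_def by (rule enorm_bound[OF p_le])
      also have "\<dots> \<le> \<gamma>" unfolding \<gamma>_def using thb
        by (intro real_sqrt_le_mono add_left_mono mult_left_mono) auto
      finally show "enorm (theta_bar a b p0 qstar - theta_hat (\<lambda>i. quant eps (y i \<omega>)) (\<lambda>i. u i \<omega>) p0 p qstar n) \<le> \<gamma>"
        unfolding ss_def[abs_def] uu_def[abs_def] .
    qed
  qed
  then show ?thesis by blast
qed


end
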